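(* If a set $C\subseteq\mathbb{R}^n$ is smoothly approximately convex at $\bar x\in C$, then it is uniformly approximable by geodesics (UAG) at $\bar x$. If moreover $C$ is locally closed at $\bar x$, then $C$ is super-regular and Clarke regular at $\bar x$.
   Context: $C$ is smoothly approximately convex at $\bar x$ if for every $\epsilon>0$ there is a neighborhood $W$ of $\bar x$ such that for all $x,x'\in C\cap W$ there is a map $\gamma:[0,1]\to C$, extending to a $\mathcal{C}^{(1)}$ map on an open neighborhood of $[0,1]$, with $\gamma(0)=x,\gamma(1)=x'$ and $\|\gamma'(t)-(x'-x)\|\le\epsilon\|x'-x\|$ for all $t$. $C$ is UAG at $\bar x$ if for every $\epsilon>0$ there is a neighborhood $W$ of $\bar x$ such that for all distinct $x,x'\in C\cap W$ there exist $\gamma:[0,1]\to C$ and $d\in\mathbb{R}^n\setminus\{0\}$ with $\gamma(0)=x$, $\gamma(1)=x'$ and $\|\gamma(t)-(x+td)\|\le\epsilon t\|d\|$ for all $t\in[0,1]$. $C$ is locally closed at $\bar x$ if $C\cap\overline B$ is closed for some closed ball $\overline B$ centered at $\bar x$. Regular normal cone: $\widehat N_C(\bar x)=\{v:\langle v,x-\bar x\rangle\le o(\|x-\bar x\|),\ x\in C\}$; normal cone $N_C(\bar x)$: all limits of $v_k\in\widehat N_C(x_k)$ with $x_k\in C$, $x_k\to\bar x$. $C$ is Clarke regular at $\bar x$ if it is locally closed there and $N_C(\bar x)=\widehat N_C(\bar x)$. $C$ is super-regular at $\bar x$ if it is locally closed there and for every $\epsilon>0$ there is a neighborhood $W$ of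 $\bar x$ with $\langle v,x'-x\rangle\le\epsilon\|v\|\|x'-x\|$ for all $x,x'\in C\cap W$ and $v\in N_C(x)$. *)

theory Defs
  imports "HOL-Analysis.Analysis"
begin

text \<open>Neighborhoods of xbar are taken to be open sets containing xbar (equivalent
  for the "there is a neighborhood" quantifiers used below).\<close>

definition smoothly_approx_convex :: "'a::euclidean_space set \<Rightarrow> 'a \<Rightarrow> bool" where
  "smoothly_approx_convex C xbar \<longleftrightarrow>
    (\<forall>\<epsilon>>0. \<exists>W. open W \<and> xbar \<in> W \<and>
      (\<forall>x\<in>C \<inter> W. \<forall>x'\<in>C \<inter> W. \<exists>\<gamma> :: real \<Rightarrow> 'a.
         (\<forall>t\<in>{0..1}. \<gamma> t \<in> C) \<and> \<gamma> 0 = x \<and> \<gamma> 1 = x' \<and>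
         (\<exists>U \<gamma>'. open U \<and> {0..1} \<subseteq> U \<and>
            (\<forall>t\<in>U. (\<gamma> has_vector_derivative \<gamma>' t) (at t)) \<and> continuous_on U \<gamma>' \<and>
            (\<forall>t\<in>{0..1}. norm (\<gamma>' t - (x' - x)) \<le> \<epsilon> * norm (x' - x)))))"

definition UAG :: "'a::euclidean_space set \<Rightarrow> 'a \<Rightarrow> bool" where
  "UAG C xbar \<longleftrightarrow>
    (\<forall>\<epsilon>>0. \<exists>W. open W \<and> xbar \<in> W \<and>
      (\<forall>x\<in>C \<inter> W. \<forall>x'\<in>C \<inter> W. x \<noteq> x' \<longrightarrow>
         (\<exists>(\<gamma> :: real \<Rightarrow> 'a) d. (\<forall>t\<in>{0..1}. \<gamma> t \<in> C) \<and> d \<noteq> 0 \<and>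
            \<gamma> 0 = x \<and> \<gamma> 1 = x' \<and>
            (\<forall>t\<in>{0..1}. norm (\<gamma> t - (x + t *\<^sub>R d)) \<le> \<epsilon> * t * norm d))))"

definition locally_closed_at :: "'a::euclidean_space set \<Rightarrow> 'a \<Rightarrow> bool" where
  "locally_closed_at C xbar \<longleftrightarrow> (\<exists>r>0. closed (C \<inter> cball xbar r))"

definition regular_normal_cone :: "'a::euclidean_space set \<Rightarrow> 'a \<Rightarrow> 'a set" where
  "regular_normal_cone C xbar =
    {v. \<forall>\<epsilon>>0. \<exists>\<delta>>0. \<forall>x\<in>C. norm (x - xbar) < \<delta> \<longrightarrow>
          v \<bullet> (x - xbar) \<le> \<epsilon> * norm (x - xbar)}"

definition normal_cone :: "'a::euclidean_space set \<Rightarrow> 'a \<Rightarrow> 'a set" where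
  "normal_cone C xbar =
    {v. \<exists>xs vs. (\<forall>k. xs k \<in> C) \<and> xs \<longlonglongrightarrow> xbar \<and>
          (\<forall>k. vs k \<in> regular_normal_cone C (xs k)) \<and> vs \<longlonglongrightarrow> v}"

definition clarke_regular :: "'a::euclidean_space set \<Rightarrow> 'a \<Rightarrow> bool" where
  "clarke_regular C xbar \<longleftrightarrow>
    locally_closed_at C xbar \<and> normal_cone C xbar = regular_normal_cone C xbar"

definition super_regular :: "'a::euclidean_space set \<Rightarrow> 'a \<Rightarrow> bool" where
  "super_regular C xbar \<longleftrightarrow> locally_closed_at C xbar \<and>
    (\<forall>\<epsilon>>0. \<exists>W. open W \<and> xbar \<in> W \<and>
      (\<forall>x\<in>C \<inter> W. \<forall>x'\<in>C \<inter> W. \<forall>v\<in>normal_cone C x.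
         v \<bullet> (x' - x) \<le> \<epsilon> * norm v * norm (x' - x)))"

end

theory Submission
  imports Defs
begin

lemma curve_bound:
  fixes \<gamma> \<gamma>' :: "real \<Rightarrow> 'a::euclidean_space"
  assumes U: "open U" "{0..1} \<subseteq> U"
    and der: "\<forall>t\<in>U. (\<gamma> has_vector_derivative \<gamma>' t) (at t)"
    and bnd: "\<forall>t\<in>{0..1}. norm (\<gamma>' t - d) \<le> e * norm d"
    and t: "t \<in> {0..1}"
  shows "norm (\<gamma> t - (\<gamma> 0 + t *\<^sub>R d)) \<le> e * t * norm d"
proof (cases "t = 0")
  case True then show ?thesis by simp
next
  case False
  then have t0: "0 < t" using t by auto
  define f where "f s = \<gamma> s - s *\<^sub>R d" for s
  have fd: "(f has_vector_derivative (\<gamma>' s - d)) (at s)" if "s \<in> {0..1}" for s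
    unfolding f_def using der that U
    by (auto intro!: derivative_eq_intros)
  have "norm (f t - f 0) \<le> e * norm d * t - e * norm d * 0"
  proof (rule differentiable_bound_general[of 0 t f "\<lambda>s. e * norm d * s" "\<lambda>s. \<gamma>' s - d" "\<lambda>s. e * norm d"])
    show "0 < t" by fact
    show "continuous_on {0..t} f"
    proof (rule continuous_at_imp_continuous_on, rule ballI)
      fix s assume "s \<in> {0..t}"
      then show "isCont f s" using t by (intro has_vector_derivative_continuous[OF fd]) auto
    qed
    show "continuous_on {0..t} (\<lambda>s. e * norm d * s)"
      by (intro continuous_intros)
    show "(f has_vector_derivative \<gamma>' x - d) (at x)" if "0 < x" "x < t" for x
      using fd that t by auto
    show "((\<lambda>s. e * norm d * s) has_vector_derivative e * norm d) (at x)" for x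
      by (auto intro!: derivative_eq_intros)
    show "norm (\<gamma>' x - d) \<le> e * norm d" if "0 < x" "x < t" for x
      using bnd that t by auto
  qed
  then show ?thesis unfolding f_def by (simp add: algebra_simps)
qed

lemma le_by_eps:
  fixes a b c :: real
  assumes "c \<ge> 0" "\<And>\<eta>. \<eta> > 0 \<Longrightarrow> a \<le> b + \<eta> * c"
  shows "a \<le> b"
proof (rule ccontr)
  assume "\<not> a \<le> b"
  then have pos: "(a - b) / (2 * (c + 1)) > 0" using assms(1) by auto
  have "a \<le> b + (a - b) / (2 * (c + 1)) * c" using assms(2)[OF pos] .
  moreover have "(a - b) / (2 * (c + 1)) * c < a - b"
  proof -
    have key: "0 < (a - b) * (c + 2)" using \<open>\<not> a \<le> b\<close> assms(1) by (intro mult_pos_pos) auto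
    then have "b * c + b * 2 < a * c + a * 2" by (simp add: algebra_simps)
    then show ?thesis using assms(1) by (simp add: field_simps)
  qed
  ultimately show False by simp
qed

lemma aux_frac:
  fixes \<delta> K :: real
  assumes "0 < \<delta>" "0 \<le> K"
  shows "\<delta> / (2 * (K + 1)) * K < \<delta>"
proof -
  have "\<delta> * K < \<delta> * (2 * (K + 1))" using assms by (intro mult_strict_left_mono) auto
  moreover have "0 < 2 * (K + 1)" using assms by simp
  ultimately show ?thesis by (simp add: field_simps)
qed

lemma regular_normal_ineq:
  fixes \<gamma> :: "real \<Rightarrow> 'a::euclidean_space"
  assumes v: "v \<in> regular_normal_cone C x"
    and inC: "\<forall>t\<in>{0..1}. \<gamma> t \<in> C" and g0: "\<gamma> 0 = x"
    and e: "e \<ge> 0"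
    and cb: "\<forall>t\<in>{0..1}. norm (\<gamma> t - (x + t *\<^sub>R d)) \<le> e * t * norm d"
  shows "v \<bullet> d \<le> e * norm v * norm d"
proof (rule le_by_eps[where c = "(1 + e) * norm d"])
  show "0 \<le> (1 + e) * norm d" using e by simp
  fix \<eta> :: real assume eta: "\<eta> > 0"
  obtain \<delta> where dp: "\<delta> > 0" and dl: "\<forall>y\<in>C. norm (y - x) < \<delta> \<longrightarrow> v \<bullet> (y - x) \<le> \<eta> * norm (y - x)"
    using v eta unfolding regular_normal_cone_def by blast
  define t where "t = min (1/2) (\<delta> / (2 * ((1 + e) * norm d + 1)))"
  have "0 \<le> (1 + e) * norm d" using e by simp
  then have "0 < 2 * ((1 + e) * norm d + 1)" by (intro mult_pos_pos) auto
  then have t0: "t > 0" and t1: "t \<le> 1" using dp e unfolding t_def by auto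
  define r where "r = \<gamma> t - (x + t *\<^sub>R d)"
  have r: "norm r \<le> e * t * norm d" using cb t0 t1 unfolding r_def by auto
  have gt: "\<gamma> t - x = t *\<^sub>R d + r" unfolding r_def by simp
  have ngt: "norm (\<gamma> t - x) \<le> t * ((1 + e) * norm d)"
    using norm_triangle_ineq[of "t *\<^sub>R d" r] r t0 gt by (simp add: algebra_simps)
  have "t * ((1 + e) * norm d) \<le> \<delta> / (2 * ((1 + e) * norm d + 1)) * ((1 + e) * norm d)"
    using e t0 unfolding t_def by (intro mult_right_mono) auto
  also have "\<dots> < \<delta>"
    using dp e by (intro aux_frac) auto
  finally have "norm (\<gamma> t - x) < \<delta>" using ngt by linarith
  moreover have "\<gamma> t \<in> C" using inC t0 t1 by auto
  ultimately have "v \<bullet> (\<gamma> t - x) \<le> \<eta> * norm (\<gamma> t - x)" using dl by blast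
  also have "\<dots> \<le> \<eta> * (t * ((1 + e) * norm d))" using ngt eta by simp
  finally have A: "t * (v \<bullet> d) + v \<bullet> r \<le> t * (\<eta> * ((1 + e) * norm d))"
    unfolding gt by (simp add: inner_add_right algebra_simps)
  have "- (v \<bullet> r) \<le> norm v * norm r"
    using Cauchy_Schwarz_ineq2[of v r] by (simp add: abs_le_iff)
  also have "\<dots> \<le> norm v * (e * t * norm d)" using r by (simp add: mult_left_mono)
  finally have "t * (v \<bullet> d) \<le> t * (e * norm v * norm d + \<eta> * ((1 + e) * norm d))"
    using A by (simp add: algebra_simps)
  then show "v \<bullet> d \<le> e * norm v * norm d + \<eta> * ((1 + e) * norm d)"
    using t0 by simp
qed

lemma sac_regular:
  assumes sac: "smoothly_approx_convex C xbar" and e: "e > 0"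
  shows "\<exists>W. open W \<and> xbar \<in> W \<and>
    (\<forall>x\<in>C \<inter> W. \<forall>x'\<in>C \<inter> W. (\<exists>\<gamma> d. (\<forall>t\<in>{0..1}. \<gamma> t \<in> C) \<and> \<gamma> 0 = x \<and> \<gamma> 1 = x' \<and> d = x' - x \<and>
       (\<forall>t\<in>{0..1}. norm (\<gamma> t - (x + t *\<^sub>R d)) \<le> e * t * norm d)))"
proof -
  obtain W where W: "open W" "xbar \<in> W" and H: "\<forall>x\<in>C \<inter> W. \<forall>x'\<in>C \<inter> W. \<exists>\<gamma> :: real \<Rightarrow> 'a.
         (\<forall>t\<in>{0..1}. \<gamma> t \<in> C) \<and> \<gamma> 0 = x \<and> \<gamma> 1 = x' \<and>
         (\<exists>U \<gamma>'. open U \<and> {0..1} \<subseteq> U \<and>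
            (\<forall>t\<in>U. (\<gamma> has_vector_derivative \<gamma>' t) (at t)) \<and> continuous_on U \<gamma>' \<and>
            (\<forall>t\<in>{0..1}. norm (\<gamma>' t - (x' - x)) \<le> e * norm (x' - x)))"
    using sac[unfolded smoothly_approx_convex_def, rule_format, OF e] by (elim exE conjE) (rule that)
  show ?thesis
  proof (rule exI, intro conjI ballI)
    show "open W" "xbar \<in> W" by fact+
    fix x x' assume x: "x \<in> C \<inter> W" and x': "x' \<in> C \<inter> W"
    obtain \<gamma> where g1: "\<forall>t\<in>{0..1}. \<gamma> t \<in> C" "\<gamma> 0 = x" "\<gamma> 1 = x'" and
      ex: "\<exists>U \<gamma>'. open U \<and> {0..1} \<subseteq> U \<and>
            (\<forall>t\<in>U. (\<gamma> has_vector_derivative \<gamma>' t) (at t)) \<and> continuous_on U \<gamma>' \<and>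
            (\<forall>t\<in>{0..1}. norm (\<gamma>' t - (x' - x)) \<le> e * norm (x' - x))"
      using H[rule_format, OF x x'] by blast
    obtain U \<gamma>' where g2: "open U" "{0..1} \<subseteq> U" "\<forall>t\<in>U. (\<gamma> has_vector_derivative \<gamma>' t) (at t)"
      "\<forall>t\<in>{0..1}. norm (\<gamma>' t - (x' - x)) \<le> e * norm (x' - x)"
      using ex by (elim exE conjE) (rule that)
    note g = g1 g2
    show "\<exists>\<gamma> d. (\<forall>t\<in>{0..1}. \<gamma> t \<in> C) \<and> \<gamma> 0 = x \<and> \<gamma> 1 = x' \<and> d = x' - x \<and>
       (\<forall>t\<in>{0..1}. norm (\<gamma> t - (x + t *\<^sub>R d)) \<le> e * t * norm d)"
      using g curve_bound[OF g(4,5,6,7)] by (intro exI[of _ \<gamma>] exI[of _ "x' - x"]) auto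
  qed
qed

lemma sac_normal:
  assumes sac: "smoothly_approx_convex C xbar" and e: "e > 0"
  shows "\<exists>W. open W \<and> xbar \<in> W \<and>
    (\<forall>x\<in>C \<inter> W. \<forall>x'\<in>C \<inter> W. \<forall>v\<in>normal_cone C x. v \<bullet> (x' - x) \<le> e * norm v * norm (x' - x))"
proof -
  obtain W where W: "open W" "xbar \<in> W" and H: "\<forall>x\<in>C \<inter> W. \<forall>x'\<in>C \<inter> W. (\<exists>\<gamma> d. (\<forall>t\<in>{0..1}. \<gamma> t \<in> C) \<and> \<gamma> 0 = x \<and> \<gamma> 1 = x' \<and> d = x' - x \<and>
       (\<forall>t\<in>{0..1}. norm (\<gamma> t - (x + t *\<^sub>R d)) \<le> e * t * norm d))"
    using sac_regular[OF sac e] by blast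
  have R: "v \<bullet> (x' - x) \<le> e * norm v * norm (x' - x)"
    if hx: "x \<in> C \<inter> W" "x' \<in> C \<inter> W" "v \<in> regular_normal_cone C x" for x x' v
  proof -
    obtain \<gamma> dd where g: "\<forall>t\<in>{0..1}. \<gamma> t \<in> C" "\<gamma> 0 = x" "dd = x' - x"
       "\<forall>t\<in>{0..1}. norm (\<gamma> t - (x + t *\<^sub>R dd)) \<le> e * t * norm dd"
      using H[rule_format, OF hx(1) hx(2)] by blast
    show ?thesis using regular_normal_ineq[OF hx(3) g(1,2) _ g(4)] e g(3) by simp
  qed
  show ?thesis
  proof (intro exI conjI ballI)
    show "open W" "xbar \<in> W" by fact+
    fix x x' v assume x: "x \<in> C \<inter> W" and x': "x' \<in> C \<inter> W" and v: "v \<in> normal_cone C x"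
    obtain xs vs where xs: "\<forall>k. xs k \<in> C" "xs \<longlonglongrightarrow> x" "\<forall>k. vs k \<in> regular_normal_cone C (xs k)" "vs \<longlonglongrightarrow> v"
      using v unfolding normal_cone_def by blast
    have ev: "eventually (\<lambda>k. xs k \<in> W) sequentially"
      using topological_tendstoD[OF xs(2) W(1)] x by simp
    have lim: "(\<lambda>k. vs k \<bullet> (x' - xs k) - e * norm (vs k) * norm (x' - xs k)) \<longlonglongrightarrow>
        v \<bullet> (x' - x) - e * norm v * norm (x' - x)"
      using xs by (intro tendsto_intros)
    have "v \<bullet> (x' - x) - e * norm v * norm (x' - x) \<le> 0"
    proof (rule tendsto_upperbound[OF lim])
      show "\<forall>\<^sub>F k in sequentially. vs k \<bullet> (x' - xs k) - e * norm (vs k) * norm (x' - xs k) \<le> 0"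
        using ev
      proof eventually_elim
        case (elim k)
        show ?case using R[of "xs k" x' "vs k"] xs x' elim by simp
      qed
    qed simp
    then show "v \<bullet> (x' - x) \<le> e * norm v * norm (x' - x)" by simp
  qed
qed

theorem proposition3p6:
  fixes C :: "'a::euclidean_space set" and xbar :: 'a
  assumes "xbar \<in> C"
    and "smoothly_approx_convex C xbar"
  shows "UAG C xbar \<and>
    (locally_closed_at C xbar \<longrightarrow> super_regular C xbar \<and> clarke_regular C xbar)"
proof -
  have uag: "UAG C xbar"
    unfolding UAG_def
  proof (intro allI impI)
    fix e :: real assume e: "e > 0"
    obtain W where W: "open W" "xbar \<in> W" and H: "\<forall>x\<in>C \<inter> W. \<forall>x'\<in>C \<inter> W. (\<exists>\<gamma> d. (\<forall>t\<in>{0..1}. \<gamma> t \<in> C) \<and> \<gamma> 0 = x \<and> \<gamma> 1 = x' \<and> d = x' - x \<and>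
       (\<forall>t\<in>{0..1}. norm (\<gamma> t - (x + t *\<^sub>R d)) \<le> e * t * norm d))"
      using sac_regular[OF assms(2) e] by blast
    show "\<exists>W. open W \<and> xbar \<in> W \<and>
      (\<forall>x\<in>C \<inter> W. \<forall>x'\<in>C \<inter> W. x \<noteq> x' \<longrightarrow>
         (\<exists>(\<gamma> :: real \<Rightarrow> 'a) d. (\<forall>t\<in>{0..1}. \<gamma> t \<in> C) \<and> d \<noteq> 0 \<and>
            \<gamma> 0 = x \<and> \<gamma> 1 = x' \<and>
            (\<forall>t\<in>{0..1}. norm (\<gamma> t - (x + t *\<^sub>R d)) \<le> e * t * norm d)))"
    proof (rule exI[of _ W], intro conjI ballI impI)
      show "open W" "xbar \<in> W" by fact+
      fix x x' assume x: "x \<in> C \<inter> W" and x': "x' \<in> C \<inter> W" and ne: "x \<noteq> x'"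
      obtain \<gamma> dd where g: "\<forall>t\<in>{0..1}. \<gamma> t \<in> C" "\<gamma> 0 = x" "\<gamma> 1 = x'" "dd = x' - x"
         "\<forall>t\<in>{0..1}. norm (\<gamma> t - (x + t *\<^sub>R dd)) \<le> e * t * norm dd"
        using H[rule_format, OF x x'] by blast
      have "dd \<noteq> 0" using g(4) ne by simp
      then show "\<exists>(\<gamma> :: real \<Rightarrow> 'a) d. (\<forall>t\<in>{0..1}. \<gamma> t \<in> C) \<and> d \<noteq> 0 \<and>
            \<gamma> 0 = x \<and> \<gamma> 1 = x' \<and>
            (\<forall>t\<in>{0..1}. norm (\<gamma> t - (x + t *\<^sub>R d)) \<le> e * t * norm d)"
        using g by (intro exI[of _ \<gamma>] exI[of _ dd] conjI) auto
    qed
  qed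
  have sr: "\<forall>e>0. \<exists>W. open W \<and> xbar \<in> W \<and>
      (\<forall>x\<in>C \<inter> W. \<forall>x'\<in>C \<inter> W. \<forall>v\<in>normal_cone C x.
         v \<bullet> (x' - x) \<le> e * norm v * norm (x' - x))"
    using sac_normal[OF assms(2)] by blast
  have nc: "normal_cone C xbar = regular_normal_cone C xbar"
  proof
    show "regular_normal_cone C xbar \<subseteq> normal_cone C xbar"
    proof
      fix v assume v: "v \<in> regular_normal_cone C xbar"
      show "v \<in> normal_cone C xbar"
        unfolding normal_cone_def
        by (rule CollectI, rule exI[of _ "\<lambda>_. xbar"], rule exI[of _ "\<lambda>_. v"]) (simp add: assms(1) v)
    qed
  next
    show "normal_cone C xbar \<subseteq> regular_normal_cone C xbar"
    proof
      fix v assume v: "v \<in> normal_cone C xbar"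
      show "v \<in> regular_normal_cone C xbar"
        unfolding regular_normal_cone_def
      proof (intro CollectI allI impI)
        fix e :: real assume e: "e > 0"
        have "norm v + 1 > 0" by (simp add: add_nonneg_pos)
        then have e': "e / (norm v + 1) > 0" using e by simp
        obtain W where W: "open W" "xbar \<in> W" and H: "\<forall>x\<in>C \<inter> W. \<forall>x'\<in>C \<inter> W. \<forall>w\<in>normal_cone C x.
         w \<bullet> (x' - x) \<le> e / (norm v + 1) * norm w * norm (x' - x)"
          using sac_normal[OF assms(2) e'] by blast
        obtain \<delta> where dp: "\<delta> > 0" and db: "ball xbar \<delta> \<subseteq> W"
          using W openE by blast
        show "\<exists>\<delta>>0. \<forall>x\<in>C. norm (x - xbar) < \<delta> \<longrightarrow> v \<bullet> (x - xbar) \<le> e * norm (x - xbar)"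
        proof (intro exI conjI ballI impI)
          fix x assume x: "x \<in> C" "norm (x - xbar) < \<delta>"
          then have "x \<in> ball xbar \<delta>" by (simp add: dist_norm norm_minus_commute)
          then have "x \<in> W" using db by blast
          then have "v \<bullet> (x - xbar) \<le> e / (norm v + 1) * norm v * norm (x - xbar)"
            using H[rule_format, of xbar x v] assms(1) W(2) x(1) v by simp
          also have "\<dots> \<le> e * norm (x - xbar)"
          proof -
            have "e * norm v \<le> e * (norm v + 1)" using e by simp
            then have "e / (norm v + 1) * norm v \<le> e"
              using \<open>norm v + 1 > 0\<close> by (simp add: field_simps)
            then show ?thesis by (intro mult_right_mono) auto
          qed
          finally show "v \<bullet> (x - xbar) \<le> e * norm (x - xbar)" .
        qed (rule dp)
      qed
    qed
  qed
  have "super_regular C xbar" if lc: "locally_closed_at C xbar"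
    unfolding super_regular_def using lc sr by (intro conjI)
  moreover have "clarke_regular C xbar" if lc: "locally_closed_at C xbar"
    unfolding clarke_regular_def using lc nc by (intro conjI)
  ultimately show ?thesis using uag by simp
qed

end
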